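(* Let $F\subset S^{2n-1}$ be nonempty. If $\{\lambda_1,\dots,\lambda_n\}$ is linearly independent over $\mathbb{Z}$, then every point $w=(w_1,\dots,w_n)\in\bar F$ with $w_k\ne0$ for all $k$ generates a nonsparse leaf of $S^X_0(F)$. Conversely, if $\{\lambda_1,\dots,\lambda_n\}$ is linearly dependent over $\mathbb{Z}$, then there exists a set $G\subset S^{2n-1}$ such that $S^X_0(G)$ has no nonsparse leaf and $S^X_0(G)$ contains the point $\big(e^{-\lambda_1}/\sqrt n,\dots,e^{-\lambda_n}/\sqrt n\big)$.
   Context: Fix $n\ge1$ and $\lambda=(\lambda_1,\dots,\lambda_n)$ with $\lambda_1=1$, $\lambda_k>0$ for all $k$. For $z\in\mathbb{C}^n$, $t\in\mathbb{C}$ put $\Phi^X(z,t)=(z_1e^{-\lambda_1t},\dots,z_ne^{-\lambda_nt})$; $\mathbb{H}=\{\operatorname{Re}t>0\}$; $S^{2n-1}$ the unit sphere in $\mathbb{C}^n$. $S^X_0(F)=\{\Phi^X(z,t):z\in F,t\in\mathbb{H}\}$; for $z\in\bar F$ its leaf is $L_z=\{\Phi^X(z,t):t\in\mathbb{H}\}$, generated by $z$. A polynomial $q\in\mathbb{C}[z,\bar z]$ is quasi-homogeneous of type $\lambda$ with bidegree $(d_1,d_2)$ if $q(\Phi^X(z,t))=e^{-d_1t}e^{-d_2\bar t}q(z)$ for all $t\in\mathbb{H}$, $z\in\mathbb{C}^n$; $\mathcal{H}_\lambda$ is the set of such polynomials. The leaf $L_z$, $z\in\bar F$, is nonsparse if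 for every open neighborhood $U\subset S^{2n-1}$ of $z$ and every $q\in\mathcal{H}_\lambda$ of bidegree $(d_1,d_2)$ with $d_2\ne0$ and $\bar F\cap U\subset\{q=0\}$, one has $q\equiv0$ on $\mathbb{C}^n$. *)

theory Defs
  imports "HOL-Analysis.Analysis"
begin

text \<open>Points of C^n are modelled as functions nat => complex vanishing at indices >= n;
  coordinate z_k of the paper is z (k-1). The topology on nat => complex is the product
  topology, which on the closed subspace C^n agrees with the Euclidean topology.\<close>

definition Cn :: "nat \<Rightarrow> (nat \<Rightarrow> complex) set" where
  "Cn n = {z. \<forall>i\<ge>n. z i = 0}"

definition unit_sphere :: "nat \<Rightarrow> (nat \<Rightarrow> complex) set" where
  "unit_sphere n = {z \<in> Cn n. (\<Sum>i<n. (cmod (z i))\<^sup>2) = 1}"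

definition Phi :: "(nat \<Rightarrow> real) \<Rightarrow> (nat \<Rightarrow> complex) \<Rightarrow> complex \<Rightarrow> (nat \<Rightarrow> complex)" where
  "Phi lam z t = (\<lambda>i. z i * exp (- (complex_of_real (lam i) * t)))"

definition right_half_plane :: "complex set" where
  "right_half_plane = {t. Re t > 0}"

definition S0 :: "(nat \<Rightarrow> real) \<Rightarrow> (nat \<Rightarrow> complex) set \<Rightarrow> (nat \<Rightarrow> complex) set" where
  "S0 lam F = {Phi lam z t | z t. z \<in> F \<and> t \<in> right_half_plane}"

definition leaf :: "(nat \<Rightarrow> real) \<Rightarrow> (nat \<Rightarrow> complex) \<Rightarrow> (nat \<Rightarrow> complex) set" where
  "leaf lam z = Phi lam z ` right_half_plane"

definition poly_zzbar :: "nat \<Rightarrow> ((nat \<Rightarrow> complex) \<Rightarrow> complex) \<Rightarrow> bool" where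
  "poly_zzbar n q \<longleftrightarrow> (\<exists>c :: (nat \<Rightarrow> nat) \<times> (nat \<Rightarrow> nat) \<Rightarrow> complex.
      finite {p. c p \<noteq> 0} \<and>
      (\<forall>\<alpha> \<beta>. c (\<alpha>, \<beta>) \<noteq> 0 \<longrightarrow> (\<forall>i\<ge>n. \<alpha> i = 0 \<and> \<beta> i = 0)) \<and>
      (\<forall>z. q z = (\<Sum>p\<in>{p. c p \<noteq> 0}.
           c p * (\<Prod>i<n. z i ^ fst p i * cnj (z i) ^ snd p i))))"

definition quasi_hom :: "nat \<Rightarrow> (nat \<Rightarrow> real) \<Rightarrow> ((nat \<Rightarrow> complex) \<Rightarrow> complex) \<Rightarrow> real \<Rightarrow> real \<Rightarrow> bool" where
  "quasi_hom n lam q d1 d2 \<longleftrightarrow> poly_zzbar n q \<and>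
     (\<forall>t\<in>right_half_plane. \<forall>z\<in>Cn n.
        q (Phi lam z t) = exp (- (complex_of_real d1 * t)) * exp (- (complex_of_real d2 * cnj t)) * q z)"

definition nonsparse_leaf :: "nat \<Rightarrow> (nat \<Rightarrow> real) \<Rightarrow> (nat \<Rightarrow> complex) set \<Rightarrow> (nat \<Rightarrow> complex) \<Rightarrow> bool" where
  "nonsparse_leaf n lam F z \<longleftrightarrow> z \<in> closure F \<and>
     (\<forall>U q d1 d2. openin (top_of_set (unit_sphere n)) U \<and> z \<in> U \<and>
        quasi_hom n lam q d1 d2 \<and> d2 \<noteq> 0 \<and> closure F \<inter> U \<subseteq> {x. q x = 0}
        \<longrightarrow> (\<forall>x\<in>Cn n. q x = 0))"

definition Z_lin_indep :: "nat \<Rightarrow> (nat \<Rightarrow> real) \<Rightarrow> bool" where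
  "Z_lin_indep n lam \<longleftrightarrow>
     (\<forall>c :: nat \<Rightarrow> int. (\<Sum>i<n. real_of_int (c i) * lam i) = 0 \<longrightarrow> (\<forall>i<n. c i = 0))"

end

theory Submission
  imports Defs
begin

lemma exp_ne_1_small:
  fixes z :: complex
  assumes "cmod z = 1"
  shows "exp z \<noteq> 1"
proof
  assume "exp z = 1"
  then obtain m :: int where re: "Re z = 0" and im: "Im z = real_of_int (2*m) * pi"
    unfolding exp_eq_1 by blast
  have "cmod z = \<bar>Im z\<bar>" using re by (simp add: cmod_def)
  hence "\<bar>real_of_int (2*m) * pi\<bar> = 1" using assms im by simp
  hence h: "2 * \<bar>real_of_int m\<bar> * pi = 1" by (simp add: abs_mult)
  show False
  proof (cases "m = 0")
    case True thus False using h by simp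
  next
    case False
    hence "\<bar>real_of_int m\<bar> \<ge> 1" by linarith
    hence "2 * \<bar>real_of_int m\<bar> * pi \<ge> 2 * 1 * pi" using pi_gt_zero
      by (intro mult_right_mono) auto
    thus False using h pi_gt3 by linarith
  qed
qed

lemma exp_indep:
  fixes S :: "complex set"
  assumes "finite S"
  shows "(\<forall>s>0. (\<Sum>\<omega>\<in>S. k \<omega> * exp (\<omega> * of_real s)) = 0) \<Longrightarrow> w \<in> S \<Longrightarrow> k w = 0"
using assms proof (induction S arbitrary: k w rule: finite_induct)
  case empty thus ?case by simp
next
  case (insert v S)
  have main: "\<forall>\<omega>\<in>S. k \<omega> = 0"
  proof
    fix \<omega> assume om: "\<omega>\<in>S"
    hence ne: "\<omega> \<noteq> v" using insert by auto
    define h where "h = 1 / cmod (\<omega> - v)"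
    have hpos: "h > 0" using ne by (simp add: h_def)
    have "cmod ((\<omega> - v) * of_real h) = 1" using ne by (simp add: h_def norm_divide)
    hence "exp ((\<omega> - v) * of_real h) \<noteq> 1" by (rule exp_ne_1_small)
    hence exne: "exp (\<omega> * of_real h) \<noteq> exp (v * of_real h)"
      by (auto simp: left_diff_distrib exp_diff)
    have "\<forall>s>0. (\<Sum>\<omega>\<in>S. (k \<omega> * (exp (\<omega> * of_real h) - exp (v * of_real h))) * exp (\<omega> * of_real s)) = 0"
    proof (intro allI impI)
      fix s::real assume sp: "s>0"
      have P: "\<forall>s>0. k v * exp (v * of_real s) + (\<Sum>\<omega>\<in>S. k \<omega> * exp (\<omega> * of_real s)) = 0"
        using insert.prems(1) insert.hyps by simp
      have e1: "k v * exp (v * of_real s) + (\<Sum>\<omega>\<in>S. k \<omega> * exp (\<omega> * of_real s)) = 0"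
        using P sp by blast
      have "s + h > 0" using sp hpos by simp
      hence e2: "k v * exp (v * of_real (s+h)) + (\<Sum>\<omega>\<in>S. k \<omega> * exp (\<omega> * of_real (s+h))) = 0"
        using P by blast
      have ex: "\<And>x::complex. exp (x * of_real (s+h)) = exp (x * of_real h) * exp (x * of_real s)"
      proof -
        fix x :: complex
        have eq: "x * of_real (s+h) = x * of_real h + x * of_real s" by (simp add: algebra_simps)
        show "exp (x * of_real (s+h)) = exp (x * of_real h) * exp (x * of_real s)"
          unfolding eq by (rule exp_add)
      qed
      have e2': "k v * (exp (v * of_real h) * exp (v * of_real s)) + (\<Sum>\<omega>\<in>S. k \<omega> * (exp (\<omega> * of_real h) * exp (\<omega> * of_real s))) = 0"
        using e2 unfolding ex .
      have A: "(\<Sum>\<omega>\<in>S. k \<omega> * exp (\<omega> * of_real s)) = - (k v * exp (v * of_real s))"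
        using e1 by (simp add: eq_neg_iff_add_eq_0 add.commute)
      have "(\<Sum>\<omega>\<in>S. (k \<omega> * (exp (\<omega> * of_real h) - exp (v * of_real h))) * exp (\<omega> * of_real s))
          = (\<Sum>\<omega>\<in>S. k \<omega> * (exp (\<omega> * of_real h) * exp (\<omega> * of_real s))) - exp (v * of_real h) * (\<Sum>\<omega>\<in>S. k \<omega> * exp (\<omega> * of_real s))"
      proof -
        have pt: "\<And>\<omega>. (k \<omega> * (exp (\<omega> * of_real h) - exp (v * of_real h))) * exp (\<omega> * of_real s)
           = k \<omega> * (exp (\<omega> * of_real h) * exp (\<omega> * of_real s)) - exp (v * of_real h) * (k \<omega> * exp (\<omega> * of_real s))"
          by (simp add: algebra_simps)
        show ?thesis by (simp only: pt sum_subtractf sum_distrib_left)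
      qed
      also have "\<dots> = (\<Sum>\<omega>\<in>S. k \<omega> * (exp (\<omega> * of_real h) * exp (\<omega> * of_real s))) + k v * (exp (v * of_real h) * exp (v * of_real s))"
        unfolding A by (simp add: algebra_simps)
      also have "\<dots> = 0" using e2' by (simp add: add.commute)
      finally show "(\<Sum>\<omega>\<in>S. (k \<omega> * (exp (\<omega> * of_real h) - exp (v * of_real h))) * exp (\<omega> * of_real s)) = 0" .
    qed
    from insert.IH[OF this om] have "k \<omega> * (exp (\<omega> * of_real h) - exp (v * of_real h)) = 0" .
    thus "k \<omega> = 0" using exne by simp
  qed
  show ?case
  proof (cases "w = v")
    case True
    have P: "\<forall>s>0. k v * exp (v * of_real s) + (\<Sum>\<omega>\<in>S. k \<omega> * exp (\<omega> * of_real s)) = 0"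
      using insert.prems(1) insert.hyps by simp
    have "k v * exp (v * of_real 1) + (\<Sum>\<omega>\<in>S. k \<omega> * exp (\<omega> * of_real 1)) = 0"
      using P zero_less_one by blast
    thus ?thesis using main True by simp
  next
    case False thus ?thesis using main insert.prems by auto
  qed
qed


definition mon :: "nat \<Rightarrow> (nat \<Rightarrow> nat) \<Rightarrow> (nat \<Rightarrow> nat) \<Rightarrow> (nat \<Rightarrow> complex) \<Rightarrow> complex" where
  "mon n \<alpha> \<beta> z = (\<Prod>i<n. z i ^ \<alpha> i * cnj (z i) ^ \<beta> i)"

lemma exp_pow_neg: "exp (-(complex_of_real l * t)) ^ a = exp (-(complex_of_real (l * real a) * t))"
proof -
  have "exp (-(complex_of_real l * t)) ^ a = exp (of_nat a * (-(complex_of_real l * t)))"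
    by (rule exp_of_nat_mult[symmetric])
  also have "of_nat a * (-(complex_of_real l * t)) = -(complex_of_real (l * real a) * t)"
    by (simp add: algebra_simps)
  finally show ?thesis .
qed

lemma factor_Phi:
  "(z * exp (-(complex_of_real l * t))) ^ a * cnj (z * exp (-(complex_of_real l * t))) ^ b
   = (z ^ a * cnj z ^ b) * (exp (-(complex_of_real (l * real a) * t)) * exp (-(complex_of_real (l * real b) * cnj t)))"
proof -
  have c: "cnj (exp (-(complex_of_real l * t))) = exp (-(complex_of_real l * cnj t))"
    by (simp add: exp_cnj)
  show ?thesis
    unfolding complex_cnj_mult c power_mult_distrib exp_pow_neg[symmetric]
    by (simp add: algebra_simps)
qed

lemma mon_Phi:
  "mon n \<alpha> \<beta> (Phi lam z t) = mon n \<alpha> \<beta> z *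
     (exp (-(complex_of_real (\<Sum>i<n. lam i * real (\<alpha> i)) * t)) *
      exp (-(complex_of_real (\<Sum>i<n. lam i * real (\<beta> i)) * cnj t)))"
proof -
  have "mon n \<alpha> \<beta> (Phi lam z t) = (\<Prod>i<n. (z i ^ \<alpha> i * cnj (z i) ^ \<beta> i) *
      (exp (-(complex_of_real (lam i * real (\<alpha> i)) * t)) * exp (-(complex_of_real (lam i * real (\<beta> i)) * cnj t))))"
    unfolding mon_def Phi_def by (simp only: factor_Phi)
  also have "\<dots> = mon n \<alpha> \<beta> z * ((\<Prod>i<n. exp (-(complex_of_real (lam i * real (\<alpha> i)) * t))) *
       (\<Prod>i<n. exp (-(complex_of_real (lam i * real (\<beta> i)) * cnj t))))"
    unfolding mon_def by (simp only: prod.distrib)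
  also have "(\<Prod>i<n. exp (-(complex_of_real (lam i * real (\<alpha> i)) * t))) = exp (\<Sum>i<n. -(complex_of_real (lam i * real (\<alpha> i)) * t))"
    by (simp add: exp_sum)
  also have "(\<Sum>i<n. -(complex_of_real (lam i * real (\<alpha> i)) * t)) = -(complex_of_real (\<Sum>i<n. lam i * real (\<alpha> i)) * t)"
    by (simp add: sum_negf sum_distrib_right)
  also have "(\<Prod>i<n. exp (-(complex_of_real (lam i * real (\<beta> i)) * cnj t))) = exp (\<Sum>i<n. -(complex_of_real (lam i * real (\<beta> i)) * cnj t))"
    by (simp add: exp_sum)
  also have "(\<Sum>i<n. -(complex_of_real (lam i * real (\<beta> i)) * cnj t)) = -(complex_of_real (\<Sum>i<n. lam i * real (\<beta> i)) * cnj t)"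
    by (simp add: sum_negf sum_distrib_right)
  finally show ?thesis .
qed

lemma part1:
  assumes indep: "Z_lin_indep n lam" and hq: "quasi_hom n lam q d1 d2"
    and w: "\<forall>k<n. w k \<noteq> 0" and qw: "q w = 0"
  shows "\<forall>x\<in>Cn n. q x = 0"
proof -
  from hq obtain c where fin: "finite {p. c p \<noteq> 0}"
    and van: "\<forall>\<alpha> \<beta>. c (\<alpha>, \<beta>) \<noteq> 0 \<longrightarrow> (\<forall>i\<ge>n. \<alpha> i = 0 \<and> \<beta> i = 0)"
    and qdef0: "\<forall>z. q z = (\<Sum>p\<in>{p. c p \<noteq> 0}. c p * (\<Prod>i<n. z i ^ fst p i * cnj (z i) ^ snd p i))"
    unfolding quasi_hom_def poly_zzbar_def by blast
  define S where "S = {p. c p \<noteq> 0}"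
  have qdef: "\<And>z. q z = (\<Sum>p\<in>S. c p * mon n (fst p) (snd p) z)"
    using qdef0 unfolding S_def mon_def by blast
  have finS: "finite S" using fin S_def by simp
  have fe: "\<And>t z. t \<in> right_half_plane \<Longrightarrow> z \<in> Cn n \<Longrightarrow>
      q (Phi lam z t) = exp (- (complex_of_real d1 * t)) * exp (- (complex_of_real d2 * cnj t)) * q z"
    using hq unfolding quasi_hom_def by blast
  define A where "A p = (\<Sum>i<n. lam i * real (fst p i))" for p :: "(nat \<Rightarrow> nat) \<times> (nat \<Rightarrow> nat)"
  define B where "B p = (\<Sum>i<n. lam i * real (snd p i))" for p :: "(nat \<Rightarrow> nat) \<times> (nat \<Rightarrow> nat)"
  define om where "om p = -(complex_of_real (A p) * (1 + \<i>) + complex_of_real (B p) * (1 - \<i>))"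
    for p :: "(nat \<Rightarrow> nat) \<times> (nat \<Rightarrow> nat)"
  define om0 where "om0 = -(complex_of_real d1 * (1 + \<i>) + complex_of_real d2 * (1 - \<i>))"
  define z1 where "z1 = (\<lambda>i::nat. if i < n then (1::complex) else 0)"
  have z1C: "z1 \<in> Cn n" unfolding z1_def Cn_def by simp
  have monz1: "\<And>\<alpha> \<beta>. mon n \<alpha> \<beta> z1 = 1" unfolding mon_def z1_def by simp
  define Q where "Q = q z1"
  have key: "\<forall>s>0. (\<Sum>p\<in>S. c p * exp (om p * of_real s)) - Q * exp (om0 * of_real s) = 0"
  proof (intro allI impI)
    fix s :: real assume sp: "s > 0"
    define t where "t = complex_of_real s * (1 + \<i>)"
    have tH: "t \<in> right_half_plane" unfolding t_def right_half_plane_def using sp by simp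
    have ct: "cnj t = complex_of_real s * (1 - \<i>)" unfolding t_def by simp
    have e1: "\<And>p. exp (-(complex_of_real (A p) * t)) * exp (-(complex_of_real (B p) * cnj t)) = exp (om p * of_real s)"
    proof -
      fix p
      have "-(complex_of_real (A p) * t) + -(complex_of_real (B p) * cnj t) = om p * of_real s"
        unfolding ct om_def t_def by (simp add: algebra_simps)
      thus "exp (-(complex_of_real (A p) * t)) * exp (-(complex_of_real (B p) * cnj t)) = exp (om p * of_real s)"
        by (metis exp_add)
    qed
    have e0: "exp (-(complex_of_real d1 * t)) * exp (-(complex_of_real d2 * cnj t)) = exp (om0 * of_real s)"
    proof -
      have "-(complex_of_real d1 * t) + -(complex_of_real d2 * cnj t) = om0 * of_real s"
        unfolding ct om0_def t_def by (simp add: algebra_simps)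
      thus ?thesis by (metis exp_add)
    qed
    have "q (Phi lam z1 t) = (\<Sum>p\<in>S. c p * exp (om p * of_real s))"
      unfolding qdef mon_Phi monz1 A_def[symmetric] B_def[symmetric] e1 by simp
    moreover have "q (Phi lam z1 t) = Q * exp (om0 * of_real s)"
      using fe[OF tH z1C] e0 unfolding Q_def by simp
    ultimately show "(\<Sum>p\<in>S. c p * exp (om p * of_real s)) - Q * exp (om0 * of_real s) = 0" by simp
  qed
  have inj: "inj_on om S"
  proof (rule inj_onI)
    fix p p' assume pS: "p \<in> S" and p'S: "p' \<in> S" and eq: "om p = om p'"
    have "Re (om p) = Re (om p')" "Im (om p) = Im (om p')" using eq by auto
    hence AB: "A p = A p'" "B p = B p'" unfolding om_def by auto
    have fst_eq: "fst p = fst p'"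
    proof
      fix i
      show "fst p i = fst p' i"
      proof (cases "i < n")
        case True
        define cv where "cv j = int (fst p j) - int (fst p' j)" for j
        have "(\<Sum>j<n. real_of_int (cv j) * lam j) = A p - A p'"
          unfolding cv_def A_def by (simp add: sum_subtractf algebra_simps)
        hence "\<forall>j<n. cv j = 0" using indep AB unfolding Z_lin_indep_def by simp
        thus ?thesis using True unfolding cv_def by simp
      next
        case False
        thus ?thesis using van pS p'S unfolding S_def
          by (metis (mono_tags) mem_Collect_eq not_le prod.collapse)
      qed
    qed
    have snd_eq: "snd p = snd p'"
    proof
      fix i
      show "snd p i = snd p' i"
      proof (cases "i < n")
        case True
        define cv where "cv j = int (snd p j) - int (snd p' j)" for j
        have "(\<Sum>j<n. real_of_int (cv j) * lam j) = B p - B p'"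
          unfolding cv_def B_def by (simp add: sum_subtractf algebra_simps)
        hence "\<forall>j<n. cv j = 0" using indep AB unfolding Z_lin_indep_def by simp
        thus ?thesis using True unfolding cv_def by simp
      next
        case False
        thus ?thesis using van pS p'S unfolding S_def
          by (metis (mono_tags) mem_Collect_eq not_le prod.collapse)
      qed
    qed
    show "p = p'" using fst_eq snd_eq by (simp add: prod_eq_iff)
  qed
  define T where "T = insert om0 (om ` S)"
  define k where "k \<omega> = (\<Sum>p\<in>{p\<in>S. om p = \<omega>}. c p) - (if \<omega> = om0 then Q else 0)" for \<omega>
  have finT: "finite T" unfolding T_def using finS by simp
  have sumT: "\<forall>s>0. (\<Sum>\<omega>\<in>T. k \<omega> * exp (\<omega> * of_real s)) = 0"
  proof (intro allI impI)
    fix s :: real assume sp: "s > 0"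
    have g1: "(\<Sum>\<omega>\<in>T. (\<Sum>p\<in>{p\<in>S. om p = \<omega>}. c p) * exp (\<omega> * of_real s))
        = (\<Sum>\<omega>\<in>T. (\<Sum>p\<in>{p\<in>S. om p = \<omega>}. c p * exp (om p * of_real s)))"
      by (simp add: sum_distrib_right)
    also have "\<dots> = (\<Sum>p\<in>S. c p * exp (om p * of_real s))"
      by (rule sum.group[OF finS finT]) (auto simp: T_def)
    finally have g1': "(\<Sum>\<omega>\<in>T. (\<Sum>p\<in>{p\<in>S. om p = \<omega>}. c p) * exp (\<omega> * of_real s))
        = (\<Sum>p\<in>S. c p * exp (om p * of_real s))" .
    have g2: "(\<Sum>\<omega>\<in>T. (if \<omega> = om0 then Q else 0) * exp (\<omega> * of_real s)) = Q * exp (om0 * of_real s)"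
    proof -
      have "(\<Sum>\<omega>\<in>T. (if \<omega> = om0 then Q else 0) * exp (\<omega> * of_real s))
          = (\<Sum>\<omega>\<in>T. (if \<omega> = om0 then Q * exp (om0 * of_real s) else 0))"
        by (rule sum.cong) auto
      also have "\<dots> = Q * exp (om0 * of_real s)" using finT by (simp add: T_def)
      finally show ?thesis .
    qed
    have "(\<Sum>\<omega>\<in>T. k \<omega> * exp (\<omega> * of_real s))
       = (\<Sum>\<omega>\<in>T. (\<Sum>p\<in>{p\<in>S. om p = \<omega>}. c p) * exp (\<omega> * of_real s))
         - (\<Sum>\<omega>\<in>T. (if \<omega> = om0 then Q else 0) * exp (\<omega> * of_real s))"
      unfolding k_def by (simp add: left_diff_distrib sum_subtractf)
    also have "\<dots> = 0" unfolding g1' g2 using key sp by blast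
    finally show "(\<Sum>\<omega>\<in>T. k \<omega> * exp (\<omega> * of_real s)) = 0" .
  qed
  have allom: "\<forall>p\<in>S. om p = om0"
  proof (rule ccontr)
    assume "\<not> (\<forall>p\<in>S. om p = om0)"
    then obtain p where pS: "p \<in> S" and ne: "om p \<noteq> om0" by blast
    have "k (om p) = 0" by (rule exp_indep[OF finT sumT]) (simp add: T_def pS)
    moreover have "{p'\<in>S. om p' = om p} = {p}" using inj pS by (auto dest: inj_onD)
    ultimately have "c p = 0" using ne unfolding k_def by simp
    thus False using pS unfolding S_def by simp
  qed
  show ?thesis
  proof (rule ccontr)
    assume "\<not> (\<forall>x\<in>Cn n. q x = 0)"
    then obtain x where "q x \<noteq> 0" by blast
    hence "S \<noteq> {}" using qdef[of x] by auto
    then obtain p0 where p0: "p0 \<in> S" by blast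
    have "S = {p0}"
    proof
      show "S \<subseteq> {p0}"
      proof
        fix p assume "p \<in> S"
        hence "om p = om p0" using allom p0 by simp
        thus "p \<in> {p0}" using inj \<open>p\<in>S\<close> p0 by (auto dest: inj_onD)
      qed
    qed (use p0 in simp)
    hence "q w = c p0 * mon n (fst p0) (snd p0) w" using qdef[of w] by simp
    moreover have "mon n (fst p0) (snd p0) w \<noteq> 0" unfolding mon_def using w by simp
    moreover have "c p0 \<noteq> 0" using p0 S_def by simp
    ultimately show False using qw by simp
  qed
qed

lemma mon_real_swap:
  assumes "\<forall>i. cnj (u i) = u i"
  shows "mon n \<alpha> \<beta> u = mon n \<beta> \<alpha> u"
  unfolding mon_def using assms by (intro prod.cong) (auto simp: mult.commute)

lemma part2:
  assumes n1: "n \<ge> 1" and lpos: "\<forall>k<n. lam k > 0" and dep: "\<not> Z_lin_indep n lam"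
  shows "\<exists>G. G \<subseteq> unit_sphere n \<and>
               \<not> (\<exists>z\<in>closure G. nonsparse_leaf n lam G z) \<and>
               (\<lambda>k. if k < n then complex_of_real (exp (- lam k) / sqrt (real n)) else 0) \<in> S0 lam G"
proof -
  from dep obtain cc :: "nat \<Rightarrow> int" where sum0: "(\<Sum>i<n. real_of_int (cc i) * lam i) = 0"
    and nz: "\<exists>i<n. cc i \<noteq> 0" unfolding Z_lin_indep_def by blast
  obtain k where kn: "k < n" and ckpos: "cc k > 0"
  proof (rule ccontr)
    assume "\<not> thesis"
    hence neg: "\<forall>i<n. cc i \<le> 0" using that by force
    have nn: "\<forall>i\<in>{..<n}. 0 \<le> - (real_of_int (cc i) * lam i)"
      using neg lpos by (simp add: mult_nonpos_nonneg less_imp_le)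
    have "(\<Sum>i<n. - (real_of_int (cc i) * lam i)) = 0" using sum0 by (simp add: sum_negf)
    hence "\<forall>i<n. - (real_of_int (cc i) * lam i) = 0"
      using sum_nonneg_eq_0_iff[of "{..<n}" "\<lambda>i. - (real_of_int (cc i) * lam i)"] nn by simp
    hence "\<forall>i<n. cc i = 0" using lpos by (metis less_irrefl mult_eq_0_iff neg_equal_0_iff_equal of_int_eq_0_iff)
    thus False using nz by blast
  qed
  define a where "a i = (if i < n then nat (cc i) else 0)" for i
  define b where "b i = (if i < n then nat (- cc i) else 0)" for i
  have ab: "\<forall>i<n. real (a i) - real (b i) = real_of_int (cc i)"
    unfolding a_def b_def by auto
  define d where "d = (\<Sum>i<n. lam i * real (a i))"
  have dB: "(\<Sum>i<n. lam i * real (b i)) = d"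
  proof -
    have "d - (\<Sum>i<n. lam i * real (b i)) = (\<Sum>i<n. lam i * (real (a i) - real (b i)))"
      unfolding d_def by (simp add: sum_subtractf algebra_simps)
    also have "\<dots> = (\<Sum>i<n. real_of_int (cc i) * lam i)"
      using ab by (intro sum.cong) auto
    finally show ?thesis using sum0 by simp
  qed
  have ak: "a k > 0" using ckpos kn unfolding a_def by simp
  have bk: "b k = 0" using ckpos kn unfolding b_def by simp
  have dpos: "d > 0"
  proof -
    have "lam k * real (a k) \<le> d" unfolding d_def
      using kn lpos by (intro member_le_sum) auto
    moreover have "lam k * real (a k) > 0" using ak lpos kn by simp
    ultimately show ?thesis by simp
  qed
  have anb: "a \<noteq> b" using ak bk by auto
  define q where "q z = mon n b a z - mon n a b z" for z
  define C where "C p = (if p = (b, a) then (1::complex) else if p = (a, b) then -1 else 0)"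
    for p :: "(nat \<Rightarrow> nat) \<times> (nat \<Rightarrow> nat)"
  have Cset: "{p. C p \<noteq> 0} = {(b, a), (a, b)}" unfolding C_def using anb by auto
  have poly: "poly_zzbar n q"
    unfolding poly_zzbar_def
  proof (intro exI[of _ C] conjI allI impI)
    show "finite {p. C p \<noteq> 0}" unfolding Cset by simp
  next
    fix \<alpha> \<beta> i assume "C (\<alpha>, \<beta>) \<noteq> 0" "n \<le> i"
    thus "\<alpha> i = 0" "\<beta> i = 0" unfolding C_def a_def b_def by (auto split: if_splits)
  next
    fix z
    have "(b, a) \<noteq> (a, b)" using anb by simp
    thus "q z = (\<Sum>p\<in>{p. C p \<noteq> 0}. C p * (\<Prod>i<n. z i ^ fst p i * cnj (z i) ^ snd p i))"
      unfolding Cset by (simp add: q_def mon_def C_def)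
  qed
  have qh: "quasi_hom n lam q d d"
    unfolding quasi_hom_def
  proof (intro conjI ballI poly)
    fix t z
    show "q (Phi lam z t) = exp (- (complex_of_real d * t)) * exp (- (complex_of_real d * cnj t)) * q z"
      unfolding q_def mon_Phi d_def[symmetric] dB by (simp add: algebra_simps)
  qed
  define u where "u i = (if i < n then complex_of_real (1 / sqrt (real n)) else 0)" for i
  have ureal: "\<forall>i. cnj (u i) = u i" unfolding u_def by simp
  have usph: "u \<in> unit_sphere n"
  proof -
    have "(\<Sum>i<n. (cmod (u i))\<^sup>2) = (\<Sum>i<n. 1 / real n)"
      unfolding u_def by (intro sum.cong) (auto simp: power_divide norm_divide)
    also have "\<dots> = 1" using n1 by simp
    finally show ?thesis unfolding unit_sphere_def Cn_def u_def by simp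
  qed
  define G where "G = {u}"
  have clG: "closure G = {u}" unfolding G_def by simp
  have qu: "q u = 0" unfolding q_def using mon_real_swap[OF ureal] by simp
  define \<zeta> where "\<zeta> = exp (\<i> * complex_of_real (pi / (2 * real (a k))))"
  have zpow: "\<zeta> ^ a k = \<i>"
  proof -
    have "\<zeta> ^ a k = exp (of_nat (a k) * (\<i> * complex_of_real (pi / (2 * real (a k)))))"
      unfolding \<zeta>_def by (rule exp_of_nat_mult[symmetric])
    also have "of_nat (a k) * (\<i> * complex_of_real (pi / (2 * real (a k)))) = \<i> * complex_of_real (pi / 2)"
      using ak by (simp add: field_simps)
    also have "exp (\<i> * complex_of_real (pi / 2)) = \<i>"
      unfolding cis_conv_exp[symmetric] by (simp add: complex_eq_iff)
    finally show ?thesis .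
  qed
  define x where "x i = (if i = k then \<zeta> else if i < n then 1 else 0)" for i
  have xC: "x \<in> Cn n" unfolding x_def Cn_def using kn by auto
  have monx: "\<And>\<alpha> \<beta>. mon n \<alpha> \<beta> x = \<zeta> ^ \<alpha> k * cnj \<zeta> ^ \<beta> k"
  proof -
    fix \<alpha> \<beta>
    have "mon n \<alpha> \<beta> x = (x k ^ \<alpha> k * cnj (x k) ^ \<beta> k) * (\<Prod>i\<in>{..<n} - {k}. x i ^ \<alpha> i * cnj (x i) ^ \<beta> i)"
      unfolding mon_def using kn by (simp add: prod.remove)
    also have "(\<Prod>i\<in>{..<n} - {k}. x i ^ \<alpha> i * cnj (x i) ^ \<beta> i) = 1"
      by (rule prod.neutral) (auto simp: x_def)
    moreover have "x k = \<zeta>" by (simp add: x_def)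
    ultimately show "mon n \<alpha> \<beta> x = \<zeta> ^ \<alpha> k * cnj \<zeta> ^ \<beta> k" by simp
  qed
  have qx: "q x \<noteq> 0"
  proof -
    have "cnj \<zeta> ^ a k = cnj (\<zeta> ^ a k)" by simp
    hence "cnj \<zeta> ^ a k = - \<i>" using zpow by simp
    hence "q x = - \<i> - \<i>" unfolding q_def monx bk using zpow by simp
    thus ?thesis by (simp add: complex_eq_iff)
  qed
  have notns: "\<not> (\<exists>z\<in>closure G. nonsparse_leaf n lam G z)"
  proof
    assume "\<exists>z\<in>closure G. nonsparse_leaf n lam G z"
    then obtain z where zc: "z \<in> closure G" and ns: "nonsparse_leaf n lam G z" by blast
    have zu: "z = u" using zc clG by simp
    have "\<forall>y\<in>Cn n. q y = 0"
      using ns unfolding nonsparse_leaf_def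
      apply (elim conjE)
      apply (erule allE[of _ "unit_sphere n"], erule allE[of _ q], erule allE[of _ d], erule allE[of _ d])
      using zu usph qh dpos clG qu by auto
    thus False using qx xC by blast
  qed
  have inS0: "(\<lambda>k. if k < n then complex_of_real (exp (- lam k) / sqrt (real n)) else 0) \<in> S0 lam G"
  proof -
    have ph: "Phi lam u 1 = (\<lambda>k. if k < n then complex_of_real (exp (- lam k) / sqrt (real n)) else 0)"
      unfolding Phi_def u_def by (auto simp: exp_of_real[symmetric])
    have oh: "(1::complex) \<in> right_half_plane" unfolding right_half_plane_def by simp
    show ?thesis unfolding S0_def G_def mem_Collect_eq
      by (rule exI[of _ u], rule exI[of _ 1]) (use ph oh in simp)
  qed
  show ?thesis using usph notns inS0 unfolding G_def by blast
qed


theorem proposition3p3: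
  fixes n :: nat and lam :: "nat \<Rightarrow> real"
  assumes "n \<ge> 1" and "lam 0 = 1" and "\<forall>k<n. lam k > 0"
  shows "(Z_lin_indep n lam \<longrightarrow>
            (\<forall>F. F \<subseteq> unit_sphere n \<and> F \<noteq> {} \<longrightarrow>
               (\<forall>w\<in>closure F. (\<forall>k<n. w k \<noteq> 0) \<longrightarrow> nonsparse_leaf n lam F w)))
       \<and> (\<not> Z_lin_indep n lam \<longrightarrow>
            (\<exists>G. G \<subseteq> unit_sphere n \<and>
               \<not> (\<exists>z\<in>closure G. nonsparse_leaf n lam G z) \<and>
               (\<lambda>k. if k < n then complex_of_real (exp (- lam k) / sqrt (real n)) else 0) \<in> S0 lam G))"
proof (intro conjI impI allI ballI)
  fix F w
  assume indep: "Z_lin_indep n lam" and F: "F \<subseteq> unit_sphere n \<and> F \<noteq> {}"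
    and wc: "w \<in> closure F" and wnz: "\<forall>k<n. w k \<noteq> 0"
  show "nonsparse_leaf n lam F w"
    unfolding nonsparse_leaf_def
  proof (intro conjI allI impI wc)
    fix U q d1 d2
    assume h: "openin (top_of_set (unit_sphere n)) U \<and> w \<in> U \<and> quasi_hom n lam q d1 d2 \<and> d2 \<noteq> 0 \<and> closure F \<inter> U \<subseteq> {x. q x = 0}"
    hence "q w = 0" using wc by blast
    thus "\<forall>x\<in>Cn n. q x = 0" using part1[OF indep _ wnz] h by blast
  qed
next
  assume "\<not> Z_lin_indep n lam"
  thus "\<exists>G. G \<subseteq> unit_sphere n \<and>
               \<not> (\<exists>z\<in>closure G. nonsparse_leaf n lam G z) \<and>
               (\<lambda>k. if k < n then complex_of_real (exp (- lam k) / sqrt (real n)) else 0) \<in> S0 lam G"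
    using part2 assms(1,3) by blast
qed

end
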